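(* Let $\mathcal{A}\subseteq\mathcal{B}$ be sub-$\sigma$-algebras of a complete probability space $(\Omega,\mathcal{F},P)$. If $M:L^+_\infty(\mathcal{B})\to L^+_\infty(\mathcal{A})$ is a weak $\mathcal{A}$-homogeneous, regular, monotone, sublinear operator, then $M$ is $\mathcal{A}$-homogeneous.
   Context: Weak $\mathcal{A}$-homogeneous: $M(1_AX)=1_AM(X)$ for all $A\in\mathcal{A}$, $X\in L^+_\infty(\mathcal{B})$. $\mathcal{A}$-homogeneous: $M(fX)=fM(X)$ for all $f\in L^+_\infty(\mathcal{A})$. Regular: $X_n\downarrow0$ a.s. implies $M(X_n)\to0$ a.s. Sublinear: $M(X+Y)\le M(X)+M(Y)$, $M(\lambda X)=\lambda M(X)$ for real $\lambda\ge0$. Monotone: $X\ge Y\Rightarrow M(X)\ge M(Y)$. *)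

theory Defs
  imports "HOL-Probability.Probability"
begin

text \<open>Representatives of elements of L^+_infinity(N), where N is a sub-sigma-algebra
  (given as a measure with the same space) of the probability space F: N-measurable
  real functions that are F-a.e. nonnegative and F-essentially bounded.
  Elements of L^+_infinity are classes of such functions modulo F-a.e. equality.\<close>
definition Linf_pos :: "'a measure \<Rightarrow> 'a measure \<Rightarrow> ('a \<Rightarrow> real) \<Rightarrow> bool" where
  "Linf_pos F N X \<longleftrightarrow> X \<in> borel_measurable N \<and> (AE x in F. 0 \<le> X x)
     \<and> (\<exists>c. AE x in F. X x \<le> c)"

end

theory Submission
  imports Defs
begin

lemma linf_mult:
  assumes X: "Linf_pos F N X" and g: "g \<in> borel_measurable N"
    and g0: "AE x in F. 0 \<le> g x" and gc: "AE x in F. g x \<le> c"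
  shows "Linf_pos F N (\<lambda>y. g y * X y)"
proof -
  from X obtain d where d: "AE x in F. X x \<le> d" and X0: "AE x in F. 0 \<le> X x"
    and Xm: "X \<in> borel_measurable N"
    unfolding Linf_pos_def by blast
  have "AE x in F. g x * X x \<le> max c 0 * max d 0"
    using d X0 g0 gc by eventually_elim (intro mult_mono, auto)
  moreover have "AE x in F. 0 \<le> g x * X x" using X0 g0 by eventually_elim auto
  moreover have "(\<lambda>y. g y * X y) \<in> borel_measurable N" using Xm g by measurable
  ultimately show ?thesis unfolding Linf_pos_def by blast
qed

theorem lemma3p6:
  fixes F \<A> \<B> :: "'a measure"
    and M :: "('a \<Rightarrow> real) \<Rightarrow> ('a \<Rightarrow> real)"
  assumes prob: "prob_space F"
    and complete: "complete_measure F"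
    and subB: "subalgebra F \<B>"
    and subA: "subalgebra \<B> \<A>"
    \<comment> \<open>M is a well-defined map L^+_inf(B) -> L^+_inf(A) on a.e.-classes\<close>
    and maps: "\<And>X. Linf_pos F \<B> X \<Longrightarrow> Linf_pos F \<A> (M X)"
    and welldef: "\<And>X Y. Linf_pos F \<B> X \<Longrightarrow> Linf_pos F \<B> Y \<Longrightarrow>
        (AE x in F. X x = Y x) \<Longrightarrow> (AE x in F. M X x = M Y x)"
    \<comment> \<open>weak A-homogeneity\<close>
    and weak_hom: "\<And>A X. A \<in> sets \<A> \<Longrightarrow> Linf_pos F \<B> X \<Longrightarrow>
        (AE x in F. M (\<lambda>y. indicator A y * X y) x = indicator A x * M X x)"
    \<comment> \<open>regularity\<close>
    and regular: "\<And>Xs. (\<And>n. Linf_pos F \<B> (Xs n)) \<Longrightarrow>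
        (AE x in F. (\<forall>n. Xs (Suc n) x \<le> Xs n x) \<and> (\<lambda>n. Xs n x) \<longlonglongrightarrow> 0) \<Longrightarrow>
        (AE x in F. (\<lambda>n. M (Xs n) x) \<longlonglongrightarrow> 0)"
    \<comment> \<open>monotonicity\<close>
    and mono: "\<And>X Y. Linf_pos F \<B> X \<Longrightarrow> Linf_pos F \<B> Y \<Longrightarrow>
        (AE x in F. Y x \<le> X x) \<Longrightarrow> (AE x in F. M Y x \<le> M X x)"
    \<comment> \<open>sublinearity\<close>
    and subadd: "\<And>X Y. Linf_pos F \<B> X \<Longrightarrow> Linf_pos F \<B> Y \<Longrightarrow>
        (AE x in F. M (\<lambda>y. X y + Y y) x \<le> M X x + M Y x)"
    and pos_hom: "\<And>X (c::real). Linf_pos F \<B> X \<Longrightarrow> 0 \<le> c \<Longrightarrow>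
        (AE x in F. M (\<lambda>y. c * X y) x = c * M X x)"
  shows "\<And>f X. Linf_pos F \<A> f \<Longrightarrow> Linf_pos F \<B> X \<Longrightarrow>
        (AE x in F. M (\<lambda>y. f y * X y) x = f x * M X x)"
proof -
  fix f X assume f: "Linf_pos F \<A> f" and X: "Linf_pos F \<B> X"
  have spB: "space \<B> = space F" and spA: "space \<A> = space \<B>" and sAB: "sets \<A> \<subseteq> sets \<B>"
    using subB subA unfolding subalgebra_def by auto
  have fA: "f \<in> borel_measurable \<A>" and f0: "AE x in F. 0 \<le> f x"
    using f unfolding Linf_pos_def by auto
  obtain cf where cf: "AE x in F. f x \<le> cf" using f unfolding Linf_pos_def by auto
  have fB: "f \<in> borel_measurable \<B>" using measurable_from_subalg[OF subA fA] .
  have X0: "AE x in F. 0 \<le> X x" using X unfolding Linf_pos_def by auto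
  have fX: "Linf_pos F \<B> (\<lambda>y. f y * X y)" by (rule linf_mult[OF X fB f0 cf])
  have MX0: "AE x in F. 0 \<le> M X x" using maps[OF X] unfolding Linf_pos_def by auto
  define A where "A n k = {x \<in> space \<A>. real k / real (Suc n) \<le> f x \<and> f x < (real k + 1) / real (Suc n)}" for n k :: nat
  have Asets: "A n k \<in> sets \<A>" for n k unfolding A_def using fA by measurable
  have key: "AE x in F. x \<in> A n k \<longrightarrow>
      real k / real (Suc n) * M X x \<le> M (\<lambda>y. f y * X y) x \<and>
      M (\<lambda>y. f y * X y) x \<le> (real k + 1) / real (Suc n) * M X x" for n k
  proof -
    let ?a = "real k / real (Suc n)" and ?b = "(real k + 1) / real (Suc n)"
    have iB: "indicator (A n k) \<in> borel_measurable \<B>"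
      using Asets[of n k] sAB by (intro borel_measurable_indicator) auto
    have iX: "Linf_pos F \<B> (\<lambda>y. indicator (A n k) y * X y)"
      by (rule linf_mult[OF X iB, of 1]) (auto simp: indicator_def)
    have Y1: "Linf_pos F \<B> (\<lambda>y. indicator (A n k) y * (f y * X y))"
      by (rule linf_mult[OF fX iB, of 1]) (auto simp: indicator_def)
    have Ya: "Linf_pos F \<B> (\<lambda>y. ?a * (indicator (A n k) y * X y))"
      by (rule linf_mult[OF iX, of _ ?a]) auto
    have Yb: "Linf_pos F \<B> (\<lambda>y. ?b * (indicator (A n k) y * X y))"
      by (rule linf_mult[OF iX, of _ ?b]) auto
    have e1: "AE x in F. M (\<lambda>y. indicator (A n k) y * (f y * X y)) x = indicator (A n k) x * M (\<lambda>y. f y * X y) x"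
      by (rule weak_hom[OF Asets fX])
    have e2: "AE x in F. M (\<lambda>y. indicator (A n k) y * X y) x = indicator (A n k) x * M X x"
      by (rule weak_hom[OF Asets X])
    have ea: "AE x in F. M (\<lambda>y. ?a * (indicator (A n k) y * X y)) x = ?a * M (\<lambda>y. indicator (A n k) y * X y) x"
      by (rule pos_hom[OF iX]) auto
    have eb: "AE x in F. M (\<lambda>y. ?b * (indicator (A n k) y * X y)) x = ?b * M (\<lambda>y. indicator (A n k) y * X y) x"
      by (rule pos_hom[OF iX]) auto
    have la: "AE x in F. ?a * (indicator (A n k) x * X x) \<le> indicator (A n k) x * (f x * X x)"
      using X0
    proof eventually_elim
      case (elim x)
      have "x \<in> A n k \<Longrightarrow> ?a * X x \<le> f x * X x"
        using elim by (intro mult_right_mono) (auto simp: A_def)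
      thus ?case by (auto simp: indicator_def)
    qed
    have lb: "AE x in F. indicator (A n k) x * (f x * X x) \<le> ?b * (indicator (A n k) x * X x)"
      using X0
    proof eventually_elim
      case (elim x)
      have "x \<in> A n k \<Longrightarrow> f x * X x \<le> ?b * X x"
        using elim by (intro mult_right_mono) (auto simp: A_def)
      thus ?case by (auto simp: indicator_def)
    qed
    have ma: "AE x in F. M (\<lambda>y. ?a * (indicator (A n k) y * X y)) x \<le> M (\<lambda>y. indicator (A n k) y * (f y * X y)) x"
      by (rule mono[OF Y1 Ya la])
    have mb: "AE x in F. M (\<lambda>y. indicator (A n k) y * (f y * X y)) x \<le> M (\<lambda>y. ?b * (indicator (A n k) y * X y)) x"
      by (rule mono[OF Yb Y1 lb])
    show ?thesis using e1 e2 ea eb ma mb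
      by eventually_elim (auto simp: indicator_def)
  qed
  have allk: "AE x in F. \<forall>n k. x \<in> A n k \<longrightarrow>
      real k / real (Suc n) * M X x \<le> M (\<lambda>y. f y * X y) x \<and>
      M (\<lambda>y. f y * X y) x \<le> (real k + 1) / real (Suc n) * M X x"
    using key by (simp add: AE_all_countable)
  show "AE x in F. M (\<lambda>y. f y * X y) x = f x * M X x"
    using allk f0 MX0 AE_space
  proof eventually_elim
    case (elim x)
    define v where "v = M (\<lambda>y. f y * X y) x"
    define m where "m = M X x"
    have bnd: "\<bar>v - f x * m\<bar> \<le> m * inverse (real (Suc n))" for n
    proof -
      define k where "k = nat \<lfloor>real (Suc n) * f x\<rfloor>"
      have fl: "real k = of_int \<lfloor>real (Suc n) * f x\<rfloor>"
        unfolding k_def using elim by simp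
      have "real k \<le> real (Suc n) * f x" "real (Suc n) * f x < real k + 1"
        unfolding fl by linarith+
      hence a1: "real k / real (Suc n) \<le> f x" and a2: "f x < (real k + 1) / real (Suc n)"
        by (simp_all add: field_simps)
      have "x \<in> A n k" unfolding A_def using a1 a2 elim spA spB by auto
      with elim have v1: "real k / real (Suc n) * m \<le> v" and v2: "v \<le> (real k + 1) / real (Suc n) * m"
        unfolding v_def m_def by auto
      have "(real k + 1) / real (Suc n) = real k / real (Suc n) + inverse (real (Suc n))"
        by (simp add: field_simps)
      note * = this
      have m0: "0 \<le> m" using elim m_def by simp
      have "f x * m \<le> (real k + 1) / real (Suc n) * m" using a2 m0 by (intro mult_right_mono) auto
      moreover have "real k / real (Suc n) * m \<le> f x * m" using a1 m0 by (intro mult_right_mono) auto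
      ultimately show ?thesis using v1 v2 unfolding * by (simp add: algebra_simps)
    qed
    have lim: "(\<lambda>n. m * inverse (real (Suc n))) \<longlonglongrightarrow> 0"
      using tendsto_mult[OF tendsto_const LIMSEQ_inverse_real_of_nat, of m] by simp
    have "\<bar>v - f x * m\<bar> \<le> 0"
      by (rule LIMSEQ_le_const[OF lim]) (use bnd in auto)
    thus ?case unfolding v_def m_def by simp
  qed
qed


end
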